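(* Let $f\in\mathbb R[x_1,\dots,x_n]$ be not identically zero and let $s(x)=\sum_{j=1}^n x_j$. Then the polynomial $s f$ has at least $n$ distinct monomials (with nonzero coefficients). *)

theory Defs
  imports Complex_Main "HOL-Library.Poly_Mapping"
begin

text \<open>Multivariate real polynomials: finitely supported maps from monomials
  (exponent vectors, finitely supported maps variable index to exponent) to real
  coefficients; multiplication is the convolution product of Poly_Mapping.
  Variable x_j (j = 0..n-1) is the monomial with exponent 1 at j.\<close>

type_synonym mpoly = "(nat \<Rightarrow>\<^sub>0 nat) \<Rightarrow>\<^sub>0 real"

definition Var :: "nat \<Rightarrow> mpoly" where
  "Var j = Poly_Mapping.single (Poly_Mapping.single j 1) 1"

definition in_vars :: "nat \<Rightarrow> mpoly \<Rightarrow> bool" where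
  "in_vars n f \<longleftrightarrow> (\<forall>m\<in>Poly_Mapping.keys f. Poly_Mapping.keys m \<subseteq> {..<n})"

end

theory Submission
  imports Defs
begin

lemma lookup_single_mult:
  fixes f :: mpoly and a k :: "nat \<Rightarrow>\<^sub>0 nat"
  shows "Poly_Mapping.lookup (Poly_Mapping.single a c * f) k = c * Sum_any (\<lambda>q. Poly_Mapping.lookup f q when k = a + q)"
proof -
  have "Poly_Mapping.lookup (Poly_Mapping.single a c * f) k
      = Sum_any (\<lambda>l. Poly_Mapping.lookup (Poly_Mapping.single a c) l * Sum_any (\<lambda>q. Poly_Mapping.lookup f q when k = l + q))"
    by (simp add: lookup_mult)
  also have "\<dots> = Sum_any (\<lambda>l. (c * Sum_any (\<lambda>q. Poly_Mapping.lookup f q when k = a + q)) when l = a)"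
    by (rule Sum_any.cong) (auto simp: lookup_single when_def)
  also have "\<dots> = c * Sum_any (\<lambda>q. Poly_Mapping.lookup f q when k = a + q)"
    by simp
  finally show ?thesis .
qed

lemma sum_when_cancel:
  fixes f :: mpoly
  shows "Sum_any (\<lambda>q. Poly_Mapping.lookup f q when a + m = a + q) = Poly_Mapping.lookup f m"
proof -
  have "Sum_any (\<lambda>q. Poly_Mapping.lookup f q when a + m = a + q) = Sum_any (\<lambda>q. Poly_Mapping.lookup f m when q = m)"
    by (rule Sum_any.cong) (auto simp: when_def dest: add_left_imp_eq)
  then show ?thesis by simp
qed

theorem lemma3:
  fixes n :: nat and f :: mpoly
  assumes "in_vars n f" and "f \<noteq> 0"
  shows "n \<le> card (Poly_Mapping.keys ((\<Sum>j<n. Var j) * f))"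
proof -
  let ?K = "Poly_Mapping.keys f"
  have fin: "finite ?K" by simp
  have ne: "?K \<noteq> {}" using assms(2) by simp
  define D :: "nat \<Rightarrow> nat" where "D j = Max ((\<lambda>m. Poly_Mapping.lookup m j) ` ?K)" for j
  have Dge: "Poly_Mapping.lookup q j \<le> D j" if "q \<in> ?K" for q j
    unfolding D_def using fin that by (intro Max_ge) auto
  have "\<exists>m. m \<in> ?K \<and> Poly_Mapping.lookup m j = D j" for j
  proof -
    have "D j \<in> (\<lambda>m. Poly_Mapping.lookup m j) ` ?K" unfolding D_def using fin ne by (intro Max_in) auto
    then show ?thesis by auto
  qed
  then obtain M where M: "\<And>j. M j \<in> ?K" "\<And>j. Poly_Mapping.lookup (M j) j = D j" by metis
  define e :: "nat \<Rightarrow> nat \<Rightarrow>\<^sub>0 nat" where "e j = Poly_Mapping.single j 1" for j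
  define g where "g j = e j + M j" for j
  have zero: "Poly_Mapping.lookup (Var k * f) (g j) = 0" if "k \<noteq> j" for k j
  proof -
    have Z: "(Poly_Mapping.lookup f q when g j = e k + q) = 0" for q
    proof -
      show "(Poly_Mapping.lookup f q when g j = e k + q) = 0"
      proof (cases "g j = e k + q")
        case True
        then have "Poly_Mapping.lookup (g j) j = Poly_Mapping.lookup (e k + q) j" by simp
        then have "Poly_Mapping.lookup q j = D j + 1" using that M(2)[of j]
          by (simp add: g_def e_def lookup_add lookup_single)
        then have "q \<notin> ?K" using Dge[of q j] by auto
        then show ?thesis by (simp add: in_keys_iff)
      qed simp
    qed
    have "Sum_any (\<lambda>q. Poly_Mapping.lookup f q when g j = e k + q) = 0"
      by (simp only: Z) simp
    then show ?thesis unfolding Var_def lookup_single_mult e_def by simp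
  qed
  have coeff: "Poly_Mapping.lookup ((\<Sum>k<n. Var k) * f) (g j) = Poly_Mapping.lookup f (M j)" if "j < n" for j
  proof -
    have "Poly_Mapping.lookup ((\<Sum>k<n. Var k) * f) (g j) = (\<Sum>k<n. Poly_Mapping.lookup (Var k * f) (g j))"
      by (simp add: sum_distrib_right lookup_sum)
    also have "\<dots> = Poly_Mapping.lookup (Var j * f) (g j)"
      using that by (subst sum.remove[of _ j]) (auto intro!: sum.neutral zero)
    also have "\<dots> = Poly_Mapping.lookup f (M j)"
      unfolding Var_def lookup_single_mult g_def e_def by (simp add: sum_when_cancel)
    finally show ?thesis .
  qed
  have inK: "g j \<in> Poly_Mapping.keys ((\<Sum>k<n. Var k) * f)" if "j < n" for j
    using coeff[OF that] M(1)[of j] by (simp add: in_keys_iff)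
  have inj: "inj_on g {..<n}"
  proof (rule inj_onI)
    fix j k assume "j \<in> {..<n}" "k \<in> {..<n}" "g j = g k"
    show "j = k"
    proof (rule ccontr)
      assume "j \<noteq> k"
      from \<open>g j = g k\<close> have "Poly_Mapping.lookup (g j) j = Poly_Mapping.lookup (g k) j" by simp
      then have "Poly_Mapping.lookup (M k) j = D j + 1" using \<open>j \<noteq> k\<close> M(2)[of j]
        by (simp add: g_def e_def lookup_add lookup_single)
      then show False using Dge[OF M(1)[of k], of j] by simp
    qed
  qed
  have "card (g ` {..<n}) \<le> card (Poly_Mapping.keys ((\<Sum>k<n. Var k) * f))"
    using inK by (intro card_mono) auto
  then show ?thesis using card_image[OF inj] by simp
qed

end
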